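(* Let $z\in\mathbb{R}^n$ satisfy $\dim\big(\Diamond_n\cap(z+\Diamond_n)\big)=n$. Then $$\big(\Diamond_n\cap(z+\Diamond_n)\big)\setminus\big(\operatorname{int}(\Diamond_n)\cup\operatorname{int}(z+\Diamond_n)\big)\subset\big(\Diamond_n\cap(z+\Diamond_n)\big)\setminus\bigcap_{i=1}^n\big(H^{(i)}\cup(z+H^{(i)})\big).$$
   Context: $\Diamond_n=\operatorname{conv}(\pm e_1,\ldots,\pm e_n)\subset\mathbb{R}^n$; $\operatorname{int}$ denotes interior; $H^{(i)}=\{x\in\mathbb{R}^n: x_i=0\}$ is the $i$-th coordinate hyperplane, the span of $e_j$, $j\ne i$. *)

theory Defs
  imports "HOL-Analysis.Analysis"
begin

definition cross_polytope :: "(real ^ 'n) set" where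
  "cross_polytope = convex hull ((\<lambda>i. axis i 1) ` UNIV \<union> (\<lambda>i. axis i (-1)) ` UNIV)"

definition coord_hyperplane :: "'n \<Rightarrow> (real ^ 'n) set" where
  "coord_hyperplane i = {x. x $ i = 0}"

end

theory Submission
  imports Defs
begin

definition l1n :: "real ^ 'n \<Rightarrow> real" where
  "l1n x = (\<Sum>i\<in>UNIV. \<bar>x $ i\<bar>)"

lemma l1n_convex: "convex {x::real^'n. l1n x \<le> 1}"
proof (rule convexI)
  fix x y :: "real^'n" and u v :: real
  assume x: "x \<in> {x. l1n x \<le> 1}" and y: "y \<in> {x. l1n x \<le> 1}" and u: "0 \<le> u" and v: "0 \<le> v" and uv: "u + v = 1"
  have "l1n (u *\<^sub>R x + v *\<^sub>R y) \<le> (\<Sum>i\<in>UNIV. u * \<bar>x $ i\<bar> + v * \<bar>y $ i\<bar>)"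
    unfolding l1n_def
  proof (rule sum_mono)
    fix i
    have "\<bar>u * x $ i + v * y $ i\<bar> \<le> \<bar>u * x $ i\<bar> + \<bar>v * y $ i\<bar>" by (rule abs_triangle_ineq)
    also have "\<dots> = u * \<bar>x $ i\<bar> + v * \<bar>y $ i\<bar>" using u v by (simp add: abs_mult)
    finally show "\<bar>(u *\<^sub>R x + v *\<^sub>R y) $ i\<bar> \<le> u * \<bar>x $ i\<bar> + v * \<bar>y $ i\<bar>" by simp
  qed
  also have "\<dots> = u * l1n x + v * l1n y" by (simp add: l1n_def sum.distrib sum_distrib_left)
  also have "\<dots> \<le> u * 1 + v * 1" using x y u v by (intro add_mono mult_left_mono) auto
  finally show "u *\<^sub>R x + v *\<^sub>R y \<in> {x. l1n x \<le> 1}" using uv by simp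
qed

lemma l1n_axis: "l1n (axis i (c::real) :: real^'n) = \<bar>c\<bar>"
proof -
  have "l1n (axis i c :: real^'n) = (\<Sum>j\<in>UNIV. if j = i then \<bar>c\<bar> else 0)"
    unfolding l1n_def by (intro sum.cong) (auto simp: axis_def)
  then show ?thesis by simp
qed

lemma cross_le: "x \<in> cross_polytope \<Longrightarrow> l1n x \<le> 1"
proof -
  assume "x \<in> cross_polytope"
  moreover have "cross_polytope \<subseteq> {x::real^'n. l1n x \<le> 1}"
    unfolding cross_polytope_def
    by (rule hull_minimal) (auto simp: l1n_axis l1n_convex)
  ultimately show ?thesis by auto
qed

lemma cone_sum:
  fixes S :: "'b::real_vector set"
  assumes "convex S" "0 \<in> S" "finite A" "\<And>i. i \<in> A \<Longrightarrow> u i \<ge> 0" "sum u A \<le> 1"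
    "\<And>i. i \<in> A \<Longrightarrow> p i \<in> S"
  shows "(\<Sum>i\<in>A. u i *\<^sub>R p i) \<in> S"
proof (cases "sum u A = 0")
  case True
  then have "\<forall>i\<in>A. u i = 0" using sum_nonneg_eq_0_iff assms(3,4) by blast
  then show ?thesis using assms(2) by simp
next
  case False
  define t where "t = sum u A"
  have t: "t > 0" using False assms(4) sum_nonneg unfolding t_def by (metis less_eq_real_def)
  have "(\<Sum>i\<in>A. (u i / t) *\<^sub>R p i) \<in> S"
    apply (rule convex_sum[OF assms(3,1)])
    using t assms by (auto simp: t_def sum_divide_distrib[symmetric])
  then have "t *\<^sub>R (\<Sum>i\<in>A. (u i / t) *\<^sub>R p i) + (1 - t) *\<^sub>R 0 \<in> S"
    using convexD[OF assms(1) _ assms(2), of _ t "1 - t"] t assms(5) t_def by auto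
  moreover have "t *\<^sub>R (\<Sum>i\<in>A. (u i / t) *\<^sub>R p i) = (\<Sum>i\<in>A. u i *\<^sub>R p i)"
    using t by (simp add: scaleR_sum_right)
  ultimately show ?thesis by simp
qed

lemma le_cross: "l1n (x::real^'n) \<le> 1 \<Longrightarrow> x \<in> cross_polytope"
proof -
  assume h: "l1n x \<le> 1"
  let ?S = "cross_polytope :: (real^'n) set"
  have cv: "convex ?S" unfolding cross_polytope_def by simp
  have pm: "axis i 1 \<in> ?S" "axis i (-1) \<in> ?S" for i
    unfolding cross_polytope_def by (auto intro: hull_inc)
  obtain i0 :: 'n where True by simp
  have "(1/2) *\<^sub>R axis i0 (1::real) + (1/2) *\<^sub>R axis i0 (-1) \<in> ?S"
    by (rule convexD[OF cv pm]) auto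
  moreover have "(1/2) *\<^sub>R axis i0 (1::real) + (1/2) *\<^sub>R axis i0 (-1) = (0::real^'n)"
    by (simp add: axis_def vec_eq_iff)
  ultimately have z: "0 \<in> ?S" by simp
  define p where "p i = (if x $ i \<ge> 0 then axis i 1 else axis i (-1) :: real^'n)" for i
  have "(\<Sum>i\<in>UNIV. \<bar>x $ i\<bar> *\<^sub>R p i) \<in> ?S"
    by (rule cone_sum[OF cv z]) (use h pm in \<open>auto simp: l1n_def p_def\<close>)
  moreover have "(\<Sum>i\<in>UNIV. \<bar>x $ i\<bar> *\<^sub>R p i) = x"
  proof -
    have "(\<Sum>i\<in>UNIV. \<bar>x $ i\<bar> *\<^sub>R p i) = (\<Sum>i\<in>UNIV. x $ i *\<^sub>R axis i 1)"
      by (intro sum.cong) (auto simp: p_def axis_def vec_eq_iff)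
    also have "\<dots> = x"
    proof (subst vec_eq_iff, intro allI)
      fix j
      have "(\<Sum>i\<in>UNIV. x $ i *\<^sub>R axis i (1::real)) $ j = (\<Sum>i\<in>UNIV. x $ i * (if j = i then 1 else 0))"
        by (simp add: sum_component axis_def)
      also have "\<dots> = (\<Sum>i\<in>UNIV. if i = j then x $ j else 0)"
        by (intro sum.cong) auto
      finally show "(\<Sum>i\<in>UNIV. x $ i *\<^sub>R axis i (1::real)) $ j = x $ j" by simp
    qed
    finally show ?thesis .
  qed
  ultimately show ?thesis by simp
qed


lemma open_l1n: "open {x::real^'n. l1n (x - z) < 1}"
  unfolding l1n_def by (intro open_Collect_less continuous_intros)

lemma tr_le: "x \<in> (+) z ` cross_polytope \<Longrightarrow> l1n (x - z) \<le> 1"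
  using cross_le by auto

lemma int_cross: "l1n (x::real^'n) < 1 \<Longrightarrow> x \<in> interior cross_polytope"
proof -
  assume h: "l1n x < 1"
  have "{y::real^'n. l1n (y - 0) < 1} \<subseteq> interior cross_polytope"
    by (rule interior_maximal[OF _ open_l1n]) (auto intro: le_cross)
  then show ?thesis using h by auto
qed

lemma int_tr: "l1n ((x::real^'n) - z) < 1 \<Longrightarrow> x \<in> interior ((+) z ` cross_polytope)"
proof -
  assume h: "l1n (x - z) < 1"
  have "{y::real^'n. l1n (y - z) < 1} \<subseteq> interior ((+) z ` cross_polytope)"
  proof (rule interior_maximal[OF _ open_l1n], safe)
    fix y :: "real^'n" assume "l1n (y - z) < 1"
    then have "y - z \<in> cross_polytope" by (intro le_cross) simp
    then show "y \<in> (+) z ` cross_polytope" by (rule rev_image_eqI) simp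
  qed
  then show ?thesis using h by auto
qed

theorem lemma6p3:
  fixes z :: "real ^ 'n"
  assumes "aff_dim (cross_polytope \<inter> ((+) z ` cross_polytope)) = int CARD('n)"
  shows "(cross_polytope \<inter> ((+) z ` cross_polytope))
           - (interior cross_polytope \<union> interior ((+) z ` cross_polytope))
         \<subseteq> (cross_polytope \<inter> ((+) z ` cross_polytope))
           - (\<Inter>i. coord_hyperplane i \<union> (+) z ` coord_hyperplane i)"
proof (intro subsetI DiffI)
  fix x assume xA: "x \<in> (cross_polytope \<inter> ((+) z ` cross_polytope))
           - (interior cross_polytope \<union> interior ((+) z ` cross_polytope))"
  then show "x \<in> cross_polytope \<inter> ((+) z ` cross_polytope)" by simp
  have x1: "l1n x = 1" using xA cross_le int_cross by force
  have x2: "l1n (x - z) = 1" using xA tr_le int_tr by force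
  show "x \<notin> (\<Inter>i. coord_hyperplane i \<union> (+) z ` coord_hyperplane i)"
  proof
    assume "x \<in> (\<Inter>i. coord_hyperplane i \<union> (+) z ` coord_hyperplane i)"
    then have xi: "x $ i = 0 \<or> x $ i = z $ i" for i
      by (auto simp: coord_hyperplane_def)
    have "l1n z = (\<Sum>i\<in>UNIV. \<bar>x $ i\<bar> + \<bar>(x - z) $ i\<bar>)"
      unfolding l1n_def
    proof (intro sum.cong refl)
      fix i show "\<bar>z $ i\<bar> = \<bar>x $ i\<bar> + \<bar>(x - z) $ i\<bar>" using xi[of i] by auto
    qed
    also have "\<dots> = 2" using x1 x2 by (simp add: l1n_def sum.distrib)
    finally have z2: "l1n z = 2" .
    define s :: "real^'n" where "s = (\<chi> i. sgn (z $ i))"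
    have sz: "s \<bullet> z = 2" using z2
      by (simp add: s_def inner_vec_def l1n_def sgn_mult_self_eq abs_sgn mult.commute)
    have sle: "s \<bullet> y \<le> l1n y" for y
      unfolding s_def inner_vec_def l1n_def
      by (intro sum_mono) (simp add: sgn_if abs_if)
    have s0: "s \<noteq> 0" using sz by auto
    have sub: "cross_polytope \<inter> ((+) z ` cross_polytope) \<subseteq> {y. s \<bullet> y = 1}"
    proof (rule subsetI)
      fix y assume yy: "y \<in> cross_polytope \<inter> ((+) z ` cross_polytope)"
      then have y1: "y \<in> cross_polytope" and y2: "y \<in> (+) z ` cross_polytope" by auto
      have a: "s \<bullet> y \<le> 1" using sle[of y] cross_le[OF y1] by linarith
      have "s \<bullet> (z - y) \<le> 1"
      proof -
        have "l1n (z - y) = l1n (y - z)" unfolding l1n_def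
          by (intro sum.cong) auto
        then show ?thesis using sle[of "z - y"] tr_le[OF y2] by linarith
      qed
      then have "s \<bullet> y \<ge> 1" using sz by (simp add: inner_diff_right)
      with a show "y \<in> {y. s \<bullet> y = 1}" by simp
    qed
    have "aff_dim (cross_polytope \<inter> ((+) z ` cross_polytope)) \<le> aff_dim {y. s \<bullet> y = 1}"
      by (rule aff_dim_subset[OF sub])
    also have "\<dots> = int DIM(real^'n) - 1" using aff_dim_hyperplane[OF s0] by simp
    finally show False using assms by simp
  qed
qed

end
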